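(* For any $i,j\in[n]$ the real line bundles $E_{2,i}(L)$ and $E_{2,j}(L)$ over $M_2(L)$ are isomorphic.
   Context: Let $n\ge 4$, $[n]=\{1,\dots,n\}$, and $L=(l_1,\dots,l_n)$ with all $l_i>0$, generic in the sense that $\sum_{i\in I}\pm l_i\neq 0$ for every nonempty $I\subseteq[n]$ and every choice of signs. Let $\widetilde M_2(L)=\{(u_1,\dots,u_n)\in(S^1)^n:\sum_i l_iu_i=0\}$ and $M_2(L)=\widetilde M_2(L)/O(2)$, a smooth closed manifold of dimension $n-3$. The tautological line bundle $E_{2,i}(L)$ is the real line bundle over $M_2(L)$ obtained as the quotient by $O(2)$ of the bundle over $\widetilde M_2(L)$ whose fiber at $(u_1,\dots,u_n)$ is the tangent line $T_{u_i}S^1$. *)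

theory Defs
  imports "HOL-Analysis.Analysis"
begin

text \<open>The plane R^2 is modelled as the complex numbers; S^1 is the unit circle.
Configurations (u_1,...,u_n) are functions nat => complex, extensional (zero outside 1..n).\<close>

definition S1tan :: "complex \<Rightarrow> complex set" where
  "S1tan w = {v. Re (v * cnj w) = 0}"

definition O2 :: "(complex \<Rightarrow> complex) set" where
  "O2 = {g. \<exists>a. norm a = 1 \<and> (g = (\<lambda>z. a * z) \<or> g = (\<lambda>z. a * cnj z))}"

definition Mtilde :: "nat \<Rightarrow> (nat \<Rightarrow> real) \<Rightarrow> (nat \<Rightarrow> complex) set" where
  "Mtilde n l = {u. (\<forall>i\<in>{1..n}. norm (u i) = 1) \<and> (\<forall>i. i \<notin> {1..n} \<longrightarrow> u i = 0)
                    \<and> (\<Sum>i=1..n. complex_of_real (l i) * u i) = 0}"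

definition Mrel :: "nat \<Rightarrow> (nat \<Rightarrow> real) \<Rightarrow> ((nat \<Rightarrow> complex) \<times> (nat \<Rightarrow> complex)) set" where
  "Mrel n l = {(u, u'). u \<in> Mtilde n l \<and> u' \<in> Mtilde n l \<and> (\<exists>g\<in>O2. u' = g \<circ> u)}"

definition M2 :: "nat \<Rightarrow> (nat \<Rightarrow> real) \<Rightarrow> (nat \<Rightarrow> complex) set set" where
  "M2 n l = Mtilde n l // Mrel n l"

definition Etilde :: "nat \<Rightarrow> (nat \<Rightarrow> real) \<Rightarrow> nat \<Rightarrow> ((nat \<Rightarrow> complex) \<times> complex) set" where
  "Etilde n l i = {(u, v). u \<in> Mtilde n l \<and> v \<in> S1tan (u i)}"

text \<open>O(2) acts diagonally (it is linear, so it is its own differential).\<close>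
definition Erel :: "nat \<Rightarrow> (nat \<Rightarrow> real) \<Rightarrow> nat
     \<Rightarrow> (((nat \<Rightarrow> complex) \<times> complex) \<times> ((nat \<Rightarrow> complex) \<times> complex)) set" where
  "Erel n l i = {((u, v), (u', v')). (u, v) \<in> Etilde n l i \<and> (u', v') \<in> Etilde n l i
                   \<and> (\<exists>g\<in>O2. u' = g \<circ> u \<and> v' = g v)}"

definition E2 :: "nat \<Rightarrow> (nat \<Rightarrow> real) \<Rightarrow> nat \<Rightarrow> ((nat \<Rightarrow> complex) \<times> complex) set set" where
  "E2 n l i = Etilde n l i // Erel n l i"

definition E2proj :: "nat \<Rightarrow> (nat \<Rightarrow> real) \<Rightarrow> ((nat \<Rightarrow> complex) \<times> complex) set
     \<Rightarrow> (nat \<Rightarrow> complex) set" where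
  "E2proj n l e = Mrel n l `` (fst ` e)"

definition quot_top :: "'a topology \<Rightarrow> 'a set set \<Rightarrow> 'a set topology" where
  "quot_top X P = topology (\<lambda>U. U \<subseteq> P \<and> openin X (\<Union>U))"

definition E2top :: "nat \<Rightarrow> (nat \<Rightarrow> real) \<Rightarrow> nat \<Rightarrow> ((nat \<Rightarrow> complex) \<times> complex) set topology" where
  "E2top n l i = quot_top (subtopology euclidean (Etilde n l i)) (E2 n l i)"

text \<open>The fibre over the class of u
is identified (via the representative u) with T_{u_i}S^1 = R * (i u_i).\<close>
definition E2_iso :: "nat \<Rightarrow> (nat \<Rightarrow> real) \<Rightarrow> nat \<Rightarrow> nat
     \<Rightarrow> (((nat \<Rightarrow> complex) \<times> complex) set \<Rightarrow> ((nat \<Rightarrow> complex) \<times> complex) set) \<Rightarrow> bool" where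
  "E2_iso n l i j f \<longleftrightarrow>
     homeomorphic_map (E2top n l i) (E2top n l j) f
   \<and> (\<forall>e\<in>E2 n l i. E2proj n l (f e) = E2proj n l e)
   \<and> (\<forall>u\<in>Mtilde n l. \<exists>c::real. \<forall>t::real.
         f (Erel n l i `` {(u, complex_of_real t * \<i> * u i)})
           = Erel n l j `` {(u, complex_of_real (c * t) * \<i> * u j)})"

definition generic_lengths :: "nat \<Rightarrow> (nat \<Rightarrow> real) \<Rightarrow> bool" where
  "generic_lengths n l \<longleftrightarrow> (\<forall>I \<subseteq> {1..n}. I \<noteq> {} \<longrightarrow>
      (\<forall>\<epsilon>::nat \<Rightarrow> real. (\<forall>k\<in>I. \<epsilon> k = 1 \<or> \<epsilon> k = -1) \<longrightarrow> (\<Sum>k\<in>I. \<epsilon> k * l k) \<noteq> 0))"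

end

theory Submission
  imports Defs
begin

definition phi :: "nat \<Rightarrow> nat \<Rightarrow> (nat \<Rightarrow> complex) \<times> complex \<Rightarrow> (nat \<Rightarrow> complex) \<times> complex" where
  "phi i j = (\<lambda>(u,v). (u, v * u j / u i))"

lemma Etilde_phi:
  assumes "x \<in> Etilde n l i" "i \<in> {1..n}" "j \<in> {1..n}"
  shows "phi i j x \<in> Etilde n l j"
proof -
  obtain u v where x: "x = (u,v)" by fastforce
  have u: "u \<in> Mtilde n l" and v: "Re (v * cnj (u i)) = 0"
    using assms(1) x by (auto simp: Etilde_def S1tan_def)
  have ni: "norm (u i) = 1" and nj: "norm (u j) = 1" using u assms by (auto simp: Mtilde_def)
  have ci: "cnj (u i) * u i = 1" using ni by (metis complex_norm_square mult.commute norm_one of_real_1 power_one)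
  have cj: "u j * cnj (u j) = 1" using nj by (metis complex_norm_square norm_one of_real_1 power_one)
  have "v * u j / u i * cnj (u j) = v * cnj (u i)"
  proof -
    have nz: "u i \<noteq> 0" using ni by auto
    have "v * u j / u i * cnj (u j) = v * (u j * cnj (u j)) / u i" by simp
    also have "\<dots> = v / u i" using cj by simp
    also have "\<dots> = v * cnj (u i)" using ci nz by (simp add: field_simps)
    finally show ?thesis .
  qed
  then have "Re (v * u j / u i * cnj (u j)) = 0" using v by (simp only:)
  then have "v * u j / u i \<in> S1tan (u j)" unfolding S1tan_def by blast
  then show ?thesis using u x by (simp add: phi_def Etilde_def)
qed

lemma phi_inv:
  assumes "x \<in> Etilde n l i" "i \<in> {1..n}" "j \<in> {1..n}"
  shows "phi j i (phi i j x) = x"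
proof -
  obtain u v where x: "x = (u,v)" by fastforce
  have u: "u \<in> Mtilde n l" using assms(1) x by (auto simp: Etilde_def)
  have "norm (u i) = 1" "norm (u j) = 1" using u assms by (auto simp: Mtilde_def)
  then have "u i \<noteq> 0" "u j \<noteq> 0" by auto
  then show ?thesis using x by (simp add: phi_def)
qed

lemma O2_cases:
  assumes "g \<in> O2"
  obtains a where "norm a = 1" "g = (\<lambda>z. a * z)" | a where "norm a = 1" "g = (\<lambda>z. a * cnj z)"
  using assms unfolding O2_def by blast

lemma phi_equiv:
  assumes "g \<in> O2"
  shows "phi i j (g \<circ> u, g v) = (g \<circ> u, g (v * u j / u i))"
  using assms
proof (cases rule: O2_cases)
  case (1 a)
  then have "a \<noteq> 0" by auto
  then show ?thesis using 1 by (simp add: phi_def)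
next
  case (2 a)
  then have "a \<noteq> 0" by auto
  then show ?thesis using 2 by (simp add: phi_def)
qed

lemma id_O2: "(\<lambda>z. z) \<in> O2"
  unfolding O2_def by (rule CollectI, rule exI[of _ 1]) (simp add: fun_eq_iff)

lemma O2_inv:
  assumes "g \<in> O2" shows "\<exists>h\<in>O2. \<forall>z. h (g z) = z"
  using assms
proof (cases rule: O2_cases)
  case (1 a)
  have "cnj a * a = 1" using 1(1) by (metis complex_norm_square mult.commute norm_one of_real_1 power_one)
  then have "\<forall>z. cnj a * (a * z) = z" by (simp add: mult.assoc[symmetric])
  moreover have "(\<lambda>z. cnj a * z) \<in> O2" using 1(1) unfolding O2_def by (auto intro!: exI[of _ "cnj a"])
  ultimately show ?thesis unfolding 1(2) by (intro bexI[where x="\<lambda>z. cnj a * z"]) auto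
next
  case (2 a)
  have "a * cnj a = 1" using 2(1) by (metis complex_norm_square norm_one of_real_1 power_one)
  then have "\<forall>z. a * cnj (a * cnj z) = z" by (simp add: mult.assoc[symmetric])
  moreover have "(\<lambda>z. a * cnj z) \<in> O2" using 2(1) unfolding O2_def by auto
  ultimately show ?thesis unfolding 2(2) by (intro bexI[where x="\<lambda>z. a * cnj z"]) auto
qed

lemma O2_comp:
  assumes "g \<in> O2" "h \<in> O2" shows "h \<circ> g \<in> O2"
  using assms(1)
proof (cases rule: O2_cases)
  case (1 a)
  show ?thesis using assms(2)
  proof (cases rule: O2_cases)
    case (1 b)
    then show ?thesis using \<open>norm a = 1\<close> \<open>g = _\<close> unfolding O2_def
      by (auto intro!: exI[of _ "b*a"] simp: norm_mult o_def mult.assoc)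
  next
    case (2 b)
    then show ?thesis using \<open>norm a = 1\<close> \<open>g = _\<close> unfolding O2_def
      by (auto intro!: exI[of _ "b*cnj a"] simp: norm_mult o_def mult.assoc)
  qed
next
  case (2 a)
  show ?thesis using assms(2)
  proof (cases rule: O2_cases)
    case (1 b)
    then show ?thesis using \<open>norm a = 1\<close> \<open>g = _\<close> unfolding O2_def
      by (auto intro!: exI[of _ "b*a"] simp: norm_mult o_def mult.assoc)
  next
    case (2 b)
    then show ?thesis using \<open>norm a = 1\<close> \<open>g = _\<close> unfolding O2_def
      by (auto intro!: exI[of _ "b*cnj a"] simp: norm_mult o_def mult.assoc)
  qed
qed

lemma Erel_equiv: "equiv (Etilde n l i) (Erel n l i)"
proof (rule equivI)
  show "refl_on (Etilde n l i) (Erel n l i)"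
    unfolding refl_on_def Erel_def
    by (auto intro!: bexI[OF _ id_O2] simp: o_def)
  show "Erel n l i \<subseteq> Etilde n l i \<times> Etilde n l i" unfolding Erel_def by auto
  show "sym (Erel n l i)"
  proof (rule symI)
    fix x y assume "(x, y) \<in> Erel n l i"
    then obtain u v u' v' g where xy: "x = (u,v)" "y = (u',v')" "(u,v) \<in> Etilde n l i"
      "(u',v') \<in> Etilde n l i" "g \<in> O2" "u' = g \<circ> u" "v' = g v"
      unfolding Erel_def by blast
    obtain h where h: "h \<in> O2" "\<forall>z. h (g z) = z" using O2_inv[OF xy(5)] by blast
    have "u = h \<circ> u'" "v = h v'" using h xy by (auto simp: o_def)
    then show "(y, x) \<in> Erel n l i" using xy h unfolding Erel_def by blast
  qed
  show "trans (Erel n l i)"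
  proof (rule transI)
    fix x y z assume "(x, y) \<in> Erel n l i" "(y, z) \<in> Erel n l i"
    then obtain u v u' v' u'' v'' g h where xy: "x = (u,v)" "y = (u',v')" "z = (u'',v'')"
      "(u,v) \<in> Etilde n l i" "(u'',v'') \<in> Etilde n l i" "g \<in> O2" "u' = g \<circ> u" "v' = g v"
      "h \<in> O2" "u'' = h \<circ> u'" "v'' = h v'"
      unfolding Erel_def by auto
    have "u'' = (h \<circ> g) \<circ> u" "v'' = (h \<circ> g) v" using xy by (auto simp: o_def)
    then show "(x, z) \<in> Erel n l i" using xy O2_comp[OF xy(6) xy(9)] unfolding Erel_def by blast
  qed
qed

lemma Erel_phi:
  assumes "(x, y) \<in> Erel n l i" "i \<in> {1..n}" "j \<in> {1..n}"
  shows "(phi i j x, phi i j y) \<in> Erel n l j"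
proof -
  obtain u v u' v' g where xy: "x = (u,v)" "y = (u',v')" "(u,v) \<in> Etilde n l i"
      "(u',v') \<in> Etilde n l i" "g \<in> O2" "u' = g \<circ> u" "v' = g v"
    using assms(1) unfolding Erel_def by blast
  have p1: "phi i j x \<in> Etilde n l j" "phi i j y \<in> Etilde n l j"
    using Etilde_phi assms xy by blast+
  have "phi i j y = (g \<circ> u, g (v * u j / u i))" using phi_equiv[OF xy(5)] xy by simp
  moreover have "phi i j x = (u, v * u j / u i)" using xy by (simp add: phi_def)
  ultimately show ?thesis using p1 xy(5) unfolding Erel_def by auto
qed

lemma class_phi:
  assumes "x \<in> Etilde n l i" "i \<in> {1..n}" "j \<in> {1..n}"
  shows "phi i j ` (Erel n l i `` {x}) = Erel n l j `` {phi i j x}"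
proof
  show "phi i j ` (Erel n l i `` {x}) \<subseteq> Erel n l j `` {phi i j x}"
    using Erel_phi[OF _ assms(2,3)] by blast
  show "Erel n l j `` {phi i j x} \<subseteq> phi i j ` (Erel n l i `` {x})"
  proof
    fix y assume "y \<in> Erel n l j `` {phi i j x}"
    then have r: "(phi i j x, y) \<in> Erel n l j" by simp
    then have yE: "y \<in> Etilde n l j" unfolding Erel_def by auto
    have "(phi j i (phi i j x), phi j i y) \<in> Erel n l i" using Erel_phi[OF r assms(3,2)] .
    then have "(x, phi j i y) \<in> Erel n l i" using phi_inv[OF assms] by simp
    moreover have "y = phi i j (phi j i y)" using phi_inv[OF yE assms(3,2)] by simp
    ultimately show "y \<in> phi i j ` (Erel n l i `` {x})" by blast
  qed
qed

lemma openin_quot_top: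
  assumes eq: "equiv A r" and X: "topspace X = A"
  shows "openin (quot_top X (A//r)) U \<longleftrightarrow> U \<subseteq> A//r \<and> openin X (\<Union>U)"
proof -
  have "istopology (\<lambda>U. U \<subseteq> A//r \<and> openin X (\<Union>U))"
    unfolding istopology_def
  proof (rule conjI; intro allI impI)
    fix S T assume S: "S \<subseteq> A//r \<and> openin X (\<Union>S)" and T: "T \<subseteq> A//r \<and> openin X (\<Union>T)"
    have "\<Union>(S \<inter> T) = \<Union>S \<inter> \<Union>T"
    proof
      show "\<Union>(S \<inter> T) \<subseteq> \<Union>S \<inter> \<Union>T" by blast
      show "\<Union>S \<inter> \<Union>T \<subseteq> \<Union>(S \<inter> T)"
      proof
        fix x assume "x \<in> \<Union>S \<inter> \<Union>T"
        then obtain P Q where "P \<in> S" "Q \<in> T" "x \<in> P" "x \<in> Q" by blast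
        moreover have "P = Q \<or> P \<inter> Q = {}" using quotient_disj[OF eq] S T \<open>P \<in> S\<close> \<open>Q \<in> T\<close> by blast
        ultimately show "x \<in> \<Union>(S \<inter> T)" by blast
      qed
    qed
    then show "S \<inter> T \<subseteq> A//r \<and> openin X (\<Union>(S \<inter> T))" using S T by auto
  next
    fix K assume "\<forall>S\<in>K. S \<subseteq> A//r \<and> openin X (\<Union>S)"
    then show "\<Union>K \<subseteq> A//r \<and> openin X (\<Union>(\<Union>K))"
    proof -
      have "\<Union>(\<Union>K) = \<Union>(Union ` K)" by blast
      moreover have "openin X (\<Union>(Union ` K))"
        by (rule openin_Union) (use \<open>\<forall>S\<in>K. _\<close> in blast)
      ultimately show ?thesis using \<open>\<forall>S\<in>K. _\<close> by auto
    qed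
  qed
  then show ?thesis unfolding quot_top_def by simp
qed

lemma topspace_quot_top:
  assumes eq: "equiv A r" and X: "topspace X = A"
  shows "topspace (quot_top X (A//r)) = A//r"
proof -
  have "openin (quot_top X (A//r)) (A//r)"
    using openin_quot_top[OF assms] Union_quotient[OF eq] X openin_topspace[of X] by simp
  moreover have "\<And>U. openin (quot_top X (A//r)) U \<Longrightarrow> U \<subseteq> A//r"
    using openin_quot_top[OF assms] by blast
  ultimately show ?thesis unfolding topspace_def by blast
qed

lemma topspace_E2top: "topspace (E2top n l i) = E2 n l i"
  unfolding E2top_def E2_def by (rule topspace_quot_top[OF Erel_equiv]) simp

lemma openin_E2top:
  "openin (E2top n l i) U \<longleftrightarrow> U \<subseteq> E2 n l i \<and> openin (top_of_set (Etilde n l i)) (\<Union>U)"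
  unfolding E2top_def E2_def by (rule openin_quot_top[OF Erel_equiv]) simp

lemma cont_phi:
  assumes "i \<in> {1..n}" "j \<in> {1..n}"
  shows "continuous_on (Etilde n l i) (phi i j)"
proof -
  have eq: "phi i j = (\<lambda>x. (fst x, snd x * fst x j / fst x i))"
    by (auto simp: phi_def fun_eq_iff)
  have nz: "\<forall>x\<in>Etilde n l i. fst x i \<noteq> 0"
  proof
    fix x assume "x \<in> Etilde n l i"
    then have "norm (fst x i) = 1" using assms by (auto simp: Etilde_def Mtilde_def)
    then show "fst x i \<noteq> 0" by auto
  qed
  have c1: "continuous_on (Etilde n l i) (\<lambda>x. fst x k)" for k
    by (rule continuous_on_product_then_coordinatewise[OF continuous_on_fst[OF continuous_on_id]])
  show ?thesis unfolding eq
    by (intro continuous_intros c1) (use nz in auto)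
qed

lemma contmap_phi:
  assumes "i \<in> {1..n}" "j \<in> {1..n}"
  shows "continuous_map (E2top n l i) (E2top n l j) (\<lambda>e. phi i j ` e)"
  unfolding continuous_map_def
proof (intro conjI allI impI)
  show "(\<lambda>e. phi i j ` e) \<in> topspace (E2top n l i) \<rightarrow> topspace (E2top n l j)"
  proof
    fix e assume "e \<in> topspace (E2top n l i)"
    then obtain x where x: "x \<in> Etilde n l i" "e = Erel n l i `` {x}"
      by (auto simp: topspace_E2top E2_def elim!: quotientE)
    have "phi i j ` e = Erel n l j `` {phi i j x}" using class_phi[OF x(1) assms] x(2) by simp
    then show "phi i j ` e \<in> topspace (E2top n l j)"
      using Etilde_phi[OF x(1) assms] by (simp add: topspace_E2top E2_def quotientI)
  qed
  fix U assume U: "openin (E2top n l j) U"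
  then have U1: "U \<subseteq> E2 n l j" and U2: "openin (top_of_set (Etilde n l j)) (\<Union>U)"
    by (auto simp: openin_E2top)
  let ?S = "{e \<in> topspace (E2top n l i). phi i j ` e \<in> U}"
  have cm: "continuous_map (top_of_set (Etilde n l i)) (top_of_set (Etilde n l j)) (phi i j)"
    using cont_phi[OF assms] Etilde_phi[OF _ assms]
    by (auto simp: continuous_map_in_subtopology)
  have "\<Union>?S = {x \<in> topspace (top_of_set (Etilde n l i)). phi i j x \<in> \<Union>U}"
  proof (rule set_eqI, rule iffI)
    fix x assume "x \<in> \<Union>?S"
    then obtain e where e: "e \<in> E2 n l i" "phi i j ` e \<in> U" "x \<in> e" by (auto simp: topspace_E2top)
    have "x \<in> Etilde n l i" using e(1,3) Union_quotient[OF Erel_equiv] unfolding E2_def by blast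
    then show "x \<in> {x \<in> topspace (top_of_set (Etilde n l i)). phi i j x \<in> \<Union>U}"
      using e by auto
  next
    fix x assume "x \<in> {x \<in> topspace (top_of_set (Etilde n l i)). phi i j x \<in> \<Union>U}"
    then have x: "x \<in> Etilde n l i" and "phi i j x \<in> \<Union>U" by auto
    then obtain W where W: "W \<in> U" "phi i j x \<in> W" by blast
    have Wc: "W \<in> E2 n l j" using W U1 by blast
    have px: "phi i j x \<in> Etilde n l j" using Etilde_phi[OF x assms] .
    have cx: "Erel n l j `` {phi i j x} \<in> E2 n l j" using px by (simp add: E2_def quotientI)
    have "phi i j x \<in> Erel n l j `` {phi i j x}"
      using px Erel_equiv by (metis equiv_class_self)
    then have "W = Erel n l j `` {phi i j x}"
      using quotient_disj[OF Erel_equiv] Wc cx W(2) unfolding E2_def by blast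
    then have "phi i j ` (Erel n l i `` {x}) \<in> U" using class_phi[OF x assms] W(1) by simp
    moreover have "Erel n l i `` {x} \<in> topspace (E2top n l i)"
      using x by (simp add: topspace_E2top E2_def quotientI)
    moreover have "x \<in> Erel n l i `` {x}" using x Erel_equiv by (metis equiv_class_self)
    ultimately show "x \<in> \<Union>?S" by blast
  qed
  moreover have "openin (top_of_set (Etilde n l i)) {x \<in> topspace (top_of_set (Etilde n l i)). phi i j x \<in> \<Union>U}"
    using openin_continuous_map_preimage[OF cm U2] .
  moreover have "?S \<subseteq> E2 n l i" by (auto simp: topspace_E2top)
  ultimately show "openin (E2top n l i) ?S" by (simp add: openin_E2top)
qed

lemma fst_phi [simp]: "fst (phi i j x) = fst x"
  by (cases x) (simp add: phi_def)

lemma phi_phi_image: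
  assumes "e \<in> E2 n l i" "i \<in> {1..n}" "j \<in> {1..n}"
  shows "phi j i ` phi i j ` e = e"
proof -
  have "e \<subseteq> Etilde n l i" using assms(1) Union_quotient[OF Erel_equiv] unfolding E2_def by blast
  then have "\<forall>x\<in>e. phi j i (phi i j x) = x" using phi_inv assms(2,3) by blast
  then show ?thesis by (simp add: image_image)
qed

theorem mainTheorem2:
  fixes n :: nat and l :: "nat \<Rightarrow> real" and i j :: nat
  assumes "n \<ge> 4"
    and "\<forall>k\<in>{1..n}. l k > 0"
    and "generic_lengths n l"
    and "i \<in> {1..n}" and "j \<in> {1..n}"
  shows "\<exists>f. E2_iso n l i j f"
proof (intro exI)
  note ij = assms(4,5)
  show "E2_iso n l i j (\<lambda>e. phi i j ` e)"
    unfolding E2_iso_def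
  proof (intro conjI ballI)
    show "homeomorphic_map (E2top n l i) (E2top n l j) (\<lambda>e. phi i j ` e)"
      unfolding homeomorphic_map_maps homeomorphic_maps_def
      using contmap_phi[OF ij] contmap_phi[OF ij(2,1)] phi_phi_image[OF _ ij] phi_phi_image[OF _ ij(2,1)]
      by (intro exI[where x="\<lambda>e. phi j i ` e"]) (auto simp: topspace_E2top)
  next
    fix e assume "e \<in> E2 n l i"
    show "E2proj n l (phi i j ` e) = E2proj n l e"
      unfolding E2proj_def by (simp add: image_image)
  next
    fix u assume u: "u \<in> Mtilde n l"
    have "norm (u i) = 1" using u ij by (auto simp: Mtilde_def)
    then have nz: "u i \<noteq> 0" by auto
    show "\<exists>c::real. \<forall>t::real. phi i j ` (Erel n l i `` {(u, complex_of_real t * \<i> * u i)})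
           = Erel n l j `` {(u, complex_of_real (c * t) * \<i> * u j)}"
    proof (intro exI allI)
      fix t :: real
      have "(u, complex_of_real t * \<i> * u i) \<in> Etilde n l i"
      proof -
        have "complex_of_real t * \<i> * u i * cnj (u i) = complex_of_real (t * (cmod (u i))^2) * \<i>"
        proof -
          have "u i * cnj (u i) = complex_of_real ((cmod (u i))^2)"
            by (simp add: complex_norm_square[symmetric])
          then show ?thesis by (simp add: mult.assoc mult.commute mult.left_commute)
        qed
        then have "Re (complex_of_real t * \<i> * u i * cnj (u i)) = 0" by (simp only:) simp
        then show ?thesis using u by (simp add: Etilde_def S1tan_def)
      qed
      moreover have "phi i j (u, complex_of_real t * \<i> * u i) = (u, complex_of_real (1 * t) * \<i> * u j)"
        using nz by (simp add: phi_def)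
      ultimately show "phi i j ` (Erel n l i `` {(u, complex_of_real t * \<i> * u i)})
           = Erel n l j `` {(u, complex_of_real (1 * t) * \<i> * u j)}"
        using class_phi[OF _ ij] by metis
    qed
  qed
qed

end
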